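(* Let $G$ be a reflection subgroup of $G_7$, and let $n$ be the number of distinct reflection conjugacy classes of $G$. Suppose there exists an integer $m\ge n$ such that $G$ is class-searchable at every length greater than $m$, and such that for every $k\in\{1,\dots,m\}$ the following holds: two length-$k$ reflection factorizations that generate $G$ are Hurwitz equivalent if and only if they factor the same element and have the same multiset of conjugacy classes. Then the same statement holds for every length $k\ge 1$.
   Context: Let $G_7$ be the subgroup of $GL_2(\mathbb{C})$ generated by $s=\begin{bmatrix}1&0\\0&-1\end{bmatrix}$, $t=\frac14\begin{bmatrix}(1+\sqrt3)+(-1+\sqrt3)i & (1+\sqrt3)+(-1+\sqrt3)i\\ (-1+\sqrt3)-(1+\sqrt3)i & (1-\sqrt3)+(1+\sqrt3)i\end{bmatrix}$ and $u=t^{\top}$ (presentation $\langle s,t,u\mid s^2=t^3=u^3=1,\ stu=ust=tus\rangle$, order $144$). A reflection is a linear map of $\mathbb{C}^2$ whose fixed space has dimension $1$; a reflection subgroup of $G_7$ is a subgroup generated by reflections of $G_7$, and its reflection conjugacy classes are its conjugacy classes consisting of reflections. A reflection factorization of $g\in G$ of length $k$ is a tuple $(r_1,\dots,r_k)$ of reflections in $G$ with $r_1\cdots r_k=g$; it generates $\langle r_1,\dots,r_k\rangle$, and (when it generates $G$) its multiset of conjugacy classes is the multiset of $G$-conjugacy classes of its entries. The Hurwitz move $\sigma_i$ sends $(r_1,\dots,r_k)$ to $(r_1,\dots,r_{i-1},r_{i+1},r_{i+1}^{-1}r_ir_{i+1},r_{i+2},\dots,r_k)$; two factorizations are Hurwitz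 equivalent if one is obtained from the other by a finite sequence of Hurwitz moves. $G$ is class-searchable at length $k$ if: whenever $T$ is a length-$k$ reflection factorization generating $G$ and $K$ is a reflection conjugacy class of $G$ containing at least two entries of $T$, then for every $x\in K$ there is a factorization $T'$ Hurwitz equivalent to $T$ whose last entry is $x$ and whose first $k-1$ entries generate $G$. *)

theory Defs
  imports "HOL-Analysis.Analysis" "HOL-Library.Multiset"
begin

type_synonym cmat = "complex ^ 2 ^ 2"

definition r3 :: complex where "r3 = complex_of_real (sqrt 3)"

definition mk2 :: "complex \<Rightarrow> complex \<Rightarrow> complex \<Rightarrow> complex \<Rightarrow> cmat" where
  "mk2 a b c d = (\<chi> i j. if i = 1 then (if j = 1 then a else b) else (if j = 1 then c else d))"

definition s7 :: cmat where "s7 = mk2 1 0 0 (-1)"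

definition t7 :: cmat where
  "t7 = (1/4) *\<^sub>R mk2 ((1 + r3) + (-1 + r3) * \<i>) ((1 + r3) + (-1 + r3) * \<i>)
                         ((-1 + r3) - (1 + r3) * \<i>) ((1 - r3) + (1 + r3) * \<i>)"

definition u7 :: cmat where "u7 = transpose t7"

inductive_set gen_grp :: "cmat set \<Rightarrow> cmat set" for S where
  gen_one: "mat 1 \<in> gen_grp S"
| gen_base: "x \<in> S \<Longrightarrow> x \<in> gen_grp S"
| gen_mult: "x \<in> gen_grp S \<Longrightarrow> y \<in> gen_grp S \<Longrightarrow> x ** y \<in> gen_grp S"
| gen_inv: "x \<in> gen_grp S \<Longrightarrow> matrix_inv x \<in> gen_grp S"

definition G7 :: "cmat set" where "G7 = gen_grp {s7, t7, u7}"

definition is_reflection :: "cmat \<Rightarrow> bool" where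
  "is_reflection g \<longleftrightarrow> (\<exists>v::complex^2. v \<noteq> 0 \<and> {w. g *v w = w} = range (\<lambda>c. c *s v))"

definition reflection_subgroup_of_G7 :: "cmat set \<Rightarrow> bool" where
  "reflection_subgroup_of_G7 G \<longleftrightarrow>
     (\<exists>R. R \<subseteq> {r \<in> G7. is_reflection r} \<and> G = gen_grp R)"

definition refls :: "cmat set \<Rightarrow> cmat set" where
  "refls G = {r \<in> G. is_reflection r}"

definition conj_class :: "cmat set \<Rightarrow> cmat \<Rightarrow> cmat set" where
  "conj_class G x = {h ** x ** matrix_inv h | h. h \<in> G}"

definition refl_classes :: "cmat set \<Rightarrow> cmat set set" where
  "refl_classes G = {K. \<exists>x \<in> G. K = conj_class G x \<and> K \<subseteq> refls G}"

definition lprod :: "cmat list \<Rightarrow> cmat" where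
  "lprod T = foldr (**) T (mat 1)"

definition refl_fact :: "cmat set \<Rightarrow> cmat list \<Rightarrow> bool" where
  "refl_fact G T \<longleftrightarrow> set T \<subseteq> refls G"

definition generates :: "cmat set \<Rightarrow> cmat list \<Rightarrow> bool" where
  "generates G T \<longleftrightarrow> gen_grp (set T) = G"

text \<open>Hurwitz move sigma_(i+1), 0-indexed.\<close>
definition hurwitz_move :: "nat \<Rightarrow> cmat list \<Rightarrow> cmat list" where
  "hurwitz_move i T = take i T @ [T ! (i+1), matrix_inv (T ! (i+1)) ** T ! i ** T ! (i+1)] @ drop (i+2) T"

definition hurwitz_step :: "cmat list \<Rightarrow> cmat list \<Rightarrow> bool" where
  "hurwitz_step T T' \<longleftrightarrow> (\<exists>i. i + 1 < length T \<and> T' = hurwitz_move i T)"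

definition hurwitz_equiv :: "cmat list \<Rightarrow> cmat list \<Rightarrow> bool" where
  "hurwitz_equiv = hurwitz_step\<^sup>*\<^sup>*"

definition class_searchable :: "cmat set \<Rightarrow> nat \<Rightarrow> bool" where
  "class_searchable G k \<longleftrightarrow>
     (\<forall>T K. length T = k \<and> refl_fact G T \<and> generates G T \<and> K \<in> refl_classes G
        \<and> card {i. i < k \<and> T ! i \<in> K} \<ge> 2 \<longrightarrow>
        (\<forall>x \<in> K. \<exists>T'. hurwitz_equiv T T' \<and> T' \<noteq> [] \<and> last T' = x
                     \<and> generates G (butlast T')))"

definition hurwitz_classified_at :: "cmat set \<Rightarrow> nat \<Rightarrow> bool" where
  "hurwitz_classified_at G k \<longleftrightarrow>
     (\<forall>T T'. length T = k \<and> length T' = k \<and> refl_fact G T \<and> refl_fact G T'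
        \<and> generates G T \<and> generates G T' \<longrightarrow>
        (hurwitz_equiv T T' \<longleftrightarrow>
           lprod T = lprod T' \<and> mset (map (conj_class G) T) = mset (map (conj_class G) T')))"

end

theory Submission
  imports Defs
begin


type_synonym q4 = "int \<times> int \<times> int \<times> int"

fun qm :: "complex \<Rightarrow> q4 \<Rightarrow> cmat" where
  "qm \<mu> (a,b,c,d) = mk2 (\<mu> * (of_int a + of_int b * \<i>) / 2) (\<mu> * (of_int c + of_int d * \<i>) / 2)
                        (\<mu> * (- of_int c + of_int d * \<i>) / 2) (\<mu> * (of_int a - of_int b * \<i>) / 2)"

fun ham :: "q4 \<Rightarrow> q4 \<Rightarrow> q4" where
  "ham (a1,b1,c1,d1) (a2,b2,c2,d2) =
    (a1*a2 - b1*b2 - c1*c2 - d1*d2, a1*b2 + b1*a2 + c1*d2 - d1*c2,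
     a1*c2 - b1*d2 + c1*a2 + d1*b2, a1*d2 + b1*c2 - c1*b2 + d1*a2)"

fun half :: "q4 \<Rightarrow> q4" where
  "half (a,b,c,d) = (a div 2, b div 2, c div 2, d div 2)"

fun dbl :: "q4 \<Rightarrow> q4" where
  "dbl (a,b,c,d) = (2*a, 2*b, 2*c, 2*d)"

definition QL :: "q4 list" where
  "QL = [(2,0,0,0),(-2,0,0,0),(0,2,0,0),(0,-2,0,0),(0,0,2,0),(0,0,-2,0),(0,0,0,2),(0,0,0,-2)] @
        [(a,b,c,d). a \<leftarrow> [1,-1], b \<leftarrow> [1,-1], c \<leftarrow> [1,-1], d \<leftarrow> [1,-1]]"

lemma QL_closed_check:
  "list_all (\<lambda>x. list_all (\<lambda>y. ham x y = dbl (half (ham x y)) \<and> half (ham x y) \<in> set QL) QL) QL"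
  by code_simp

lemma mk2_mult: "mk2 a b c d ** mk2 a' b' c' d' = mk2 (a*a'+b*c') (a*b'+b*d') (c*a'+d*c') (c*b'+d*d')"
  unfolding mk2_def matrix_matrix_mult_def
  by (simp add: vec_eq_iff sum_2 forall_2)

lemma ent1: "\<mu>*(A1+B1*\<i>)/2 * (\<nu>*(A2+B2*\<i>)/2) + \<mu>*(C1+D1*\<i>)/2 * (\<nu>*(-C2+D2*\<i>)/2) =
   \<mu>*\<nu>*((A1*A2-B1*B2-C1*C2-D1*D2)/2 + (A1*B2+B1*A2+C1*D2-D1*C2)/2 * \<i>)/(2::complex)"
  by (simp add: field_simps)
lemma ent2: "\<mu>*(A1+B1*\<i>)/2 * (\<nu>*(C2+D2*\<i>)/2) + \<mu>*(C1+D1*\<i>)/2 * (\<nu>*(A2-B2*\<i>)/2) =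
   \<mu>*\<nu>*((A1*C2 - B1*D2 + C1*A2 + D1*B2)/2 + (A1*D2 + B1*C2 - C1*B2 + D1*A2)/2 * \<i>)/(2::complex)"
  by (simp add: field_simps)
lemma ent3: "\<mu>*(-C1+D1*\<i>)/2 * (\<nu>*(A2+B2*\<i>)/2) + \<mu>*(A1-B1*\<i>)/2 * (\<nu>*(-C2+D2*\<i>)/2) =
   \<mu>*\<nu>*(-((A1*C2 - B1*D2 + C1*A2 + D1*B2)/2) + (A1*D2 + B1*C2 - C1*B2 + D1*A2)/2 * \<i>)/(2::complex)"
  by (simp add: field_simps)
lemma ent4: "\<mu>*(-C1+D1*\<i>)/2 * (\<nu>*(C2+D2*\<i>)/2) + \<mu>*(A1-B1*\<i>)/2 * (\<nu>*(A2-B2*\<i>)/2) =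
   \<mu>*\<nu>*((A1*A2-B1*B2-C1*C2-D1*D2)/2 - (A1*B2+B1*A2+C1*D2-D1*C2)/2 * \<i>)/(2::complex)"
  by (simp add: field_simps)

lemma qm_mult0: "qm \<mu> (a1,b1,c1,d1) ** qm \<nu> (a2,b2,c2,d2) = qm (\<mu>*\<nu>) (a,b,c,d)"
  if "ham (a1,b1,c1,d1) (a2,b2,c2,d2) = dbl (a,b,c,d)"
proof -
  from that have e: "a1*a2 - b1*b2 - c1*c2 - d1*d2 = 2*a" "a1*b2 + b1*a2 + c1*d2 - d1*c2 = 2*b"
     "a1*c2 - b1*d2 + c1*a2 + d1*b2 = 2*c" "a1*d2 + b1*c2 - c1*b2 + d1*a2 = 2*d"
    by simp_all
  have e': "of_int a = (of_int a1* of_int a2 - of_int b1* of_int b2 - of_int c1* of_int c2 - of_int d1* of_int d2)/(2::complex)"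
     "of_int b = (of_int a1* of_int b2 + of_int b1* of_int a2 + of_int c1* of_int d2 - of_int d1* of_int c2)/(2::complex)"
     "of_int c = (of_int a1* of_int c2 - of_int b1* of_int d2 + of_int c1* of_int a2 + of_int d1* of_int b2)/(2::complex)"
     "of_int d = (of_int a1* of_int d2 + of_int b1* of_int c2 - of_int c1* of_int b2 + of_int d1* of_int a2)/(2::complex)"
    using e by (simp_all add: field_simps) (metis of_int_mult of_int_add of_int_diff of_int_numeral)+
  show ?thesis
    unfolding qm.simps mk2_mult e' ent1 ent2 ent3 ent4 ..
qed

lemma QL_norm_check: "list_all (\<lambda>(a,b,c,d). ham (a,b,c,d) (a,-b,-c,-d) = dbl (2,0,0,0) \<and> ham (a,-b,-c,-d) (a,b,c,d) = dbl (2,0,0,0) \<and> (a,-b,-c,-d) \<in> set QL) QL"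
  by code_simp

definition HS :: "cmat set" where
  "HS = (\<lambda>(\<mu>,x). qm \<mu> x) ` ({\<mu>. \<mu>^12 = 1} \<times> set QL)"

lemma finite_HS: "finite HS"
  unfolding HS_def by (intro finite_imageI finite_cartesian_product finite_roots_unity) auto

lemma mat1_mk2: "mat 1 = mk2 1 0 0 1"
  unfolding mk2_def mat_def by (simp add: vec_eq_iff forall_2)

lemma qm_one: "qm 1 (2,0,0,0) = mat 1"
  by (simp add: mat1_mk2)

lemma HS_mult: assumes "A \<in> HS" "B \<in> HS" shows "A ** B \<in> HS"
proof -
  obtain \<mu> x where A: "A = qm \<mu> x" "\<mu>^12 = 1" "x \<in> set QL" using assms(1) unfolding HS_def by auto
  obtain \<nu> y where B: "B = qm \<nu> y" "\<nu>^12 = 1" "y \<in> set QL" using assms(2) unfolding HS_def by auto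
  have c: "ham x y = dbl (half (ham x y))" "half (ham x y) \<in> set QL"
    using QL_closed_check A(3) B(3) unfolding list_all_iff by auto
  obtain a1 b1 c1 d1 where x: "x = (a1,b1,c1,d1)" by (cases x) auto
  obtain a2 b2 c2 d2 where y: "y = (a2,b2,c2,d2)" by (cases y) auto
  obtain a b c d where h: "half (ham x y) = (a,b,c,d)" by (cases "half (ham x y)") auto
  have "A ** B = qm (\<mu>*\<nu>) (a,b,c,d)" unfolding A B x y
    by (rule qm_mult0) (use c h x y in auto)
  moreover have "(\<mu>*\<nu>)^12 = 1" using A B by (simp add: power_mult_distrib)
  ultimately show ?thesis unfolding HS_def using c h by force
qed

lemma HS_inv: assumes "A \<in> HS" shows "\<exists>B\<in>HS. A ** B = mat 1 \<and> B ** A = mat 1"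
proof -
  obtain \<mu> x where A: "A = qm \<mu> x" "\<mu>^12 = 1" "x \<in> set QL" using assms(1) unfolding HS_def by auto
  obtain a b c d where x: "x = (a,b,c,d)" by (cases x) auto
  have c: "ham (a,b,c,d) (a,-b,-c,-d) = dbl (2,0,0,0)" "ham (a,-b,-c,-d) (a,b,c,d) = dbl (2,0,0,0)" "(a,-b,-c,-d) \<in> set QL"
    using QL_norm_check A(3) x unfolding list_all_iff by auto
  have m: "\<mu> * \<mu>^11 = 1" "\<mu>^11 * \<mu> = 1" using A(2) by (simp_all add: power_Suc[symmetric] power_Suc2[symmetric])
  have "(\<mu>^11)^12 = 1" using A(2) by (metis power_mult mult.commute power_one)
  then have "qm (\<mu>^11) (a,-b,-c,-d) \<in> HS" unfolding HS_def using c by force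
  moreover have "A ** qm (\<mu>^11) (a,-b,-c,-d) = mat 1" unfolding A x
    using qm_mult0[OF c(1), of \<mu> "\<mu>^11"] m qm_one by simp
  moreover have "qm (\<mu>^11) (a,-b,-c,-d) ** A = mat 1" unfolding A x
    using qm_mult0[OF c(2), of "\<mu>^11" \<mu>] m qm_one by simp
  ultimately show ?thesis by blast
qed

lemma inv_unique: fixes A B C :: cmat
  assumes "A ** B = mat 1" "B ** A = mat 1" "A ** C = mat 1" "C ** A = mat 1" shows "B = C"
proof -
  have "B = B ** (A ** C)" using assms(3) by simp
  also have "\<dots> = (B ** A) ** C" by (rule matrix_mul_assoc)
  finally show ?thesis using assms(2) by simp
qed

lemma matrix_inv_eq: fixes A B :: cmat
  assumes "A ** B = mat 1" "B ** A = mat 1" shows "matrix_inv A = B"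
proof -
  have "\<exists>A'. A ** A' = mat 1 \<and> A' ** A = mat 1" using assms by blast
  then have "A ** matrix_inv A = mat 1 \<and> matrix_inv A ** A = mat 1"
    unfolding matrix_inv_def by (rule someI_ex)
  then show ?thesis using inv_unique assms by blast
qed

lemma HS_matrix_inv: assumes "A \<in> HS" shows "matrix_inv A \<in> HS" "A ** matrix_inv A = mat 1" "matrix_inv A ** A = mat 1"
  using HS_inv[OF assms] matrix_inv_eq by auto

lemma scaleR_mk2: "r *\<^sub>R mk2 a b c d = mk2 (r *\<^sub>R a) (r *\<^sub>R b) (r *\<^sub>R c) (r *\<^sub>R d)"
  unfolding mk2_def by (simp add: vec_eq_iff)

lemma transpose_mk2: "transpose (mk2 a b c d) = mk2 a c b d"
  unfolding mk2_def transpose_def by (simp add: vec_eq_iff forall_2)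

lemma mk2_cong: "a = a' \<Longrightarrow> b = b' \<Longrightarrow> c = c' \<Longrightarrow> d = d' \<Longrightarrow> mk2 a b c d = mk2 a' b' c' d'"
  by simp

definition zeta :: complex where "zeta = (1 + r3 * \<i>) / 2"

lemma r3sq: "r3 * r3 = 3"
proof -
  have "r3 * r3 = of_real (sqrt 3 * sqrt 3)" unfolding r3_def of_real_mult ..
  then show ?thesis by simp
qed

lemma zeta12: "zeta ^ 12 = 1"
proof -
  have "zeta ^ 3 = -1" unfolding zeta_def
  proof -
    have "((1 + r3 * \<i>) / 2) ^ 3 = (1 + r3 * \<i>) * (1 + r3 * \<i>) * (1 + r3 * \<i>) / 8"
      by (simp add: power3_eq_cube)
    also have "(1 + r3 * \<i>) * (1 + r3 * \<i>) = 1 + 2*r3*\<i> - r3*r3"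
      by (simp add: algebra_simps)
    also have "(1 + 2*r3*\<i> - r3*r3) * (1 + r3 * \<i>) = 1 + 3*r3*\<i> - 3*(r3*r3) - (r3*r3)*r3*\<i>"
      by (simp add: algebra_simps)
    also have "(1 + 3*r3*\<i> - 3*(r3*r3) - (r3*r3)*r3*\<i>) / 8 = -1" using r3sq by simp
    finally show "((1 + r3 * \<i>) / 2) ^ 3 = -1" .
  qed
  have "zeta ^ 12 = zeta^(3*4)" by simp
  also have "\<dots> = (zeta^3)^4" by (rule power_mult)
  also have "\<dots> = 1" using \<open>zeta ^ 3 = -1\<close> by simp
  finally show ?thesis .
qed

lemma s7_qm: "s7 = qm \<i> (0,-2,0,0)"
  unfolding s7_def qm.simps by (rule mk2_cong) simp_all

lemma t7_qm: "t7 = qm zeta (1,-1,1,-1)"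
  unfolding t7_def zeta_def scaleR_mk2 qm.simps
  by (rule mk2_cong) (simp_all add: scaleR_conv_of_real field_simps)

lemma u7_qm: "u7 = qm zeta (1,-1,-1,-1)"
  unfolding u7_def t7_def zeta_def scaleR_mk2 transpose_mk2 qm.simps
  by (rule mk2_cong) (simp_all add: scaleR_conv_of_real field_simps)

lemma i12: "\<i> ^ 12 = 1"
proof -
  have "\<i> ^ 12 = (\<i>::complex)^(4*3)" by simp
  also have "\<dots> = (\<i>^4)^3" by (rule power_mult)
  finally show ?thesis by simp
qed

lemma G7_sub_HS: "G7 \<subseteq> HS"
proof
  fix g assume "g \<in> G7"
  then show "g \<in> HS" unfolding G7_def
  proof (induction rule: gen_grp.induct)
    case gen_one
    have "(2,0,0,0) \<in> set QL" unfolding QL_def by simp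
    moreover have "(1::complex)^12 = 1" by simp
    ultimately have "qm 1 (2,0,0,0) \<in> HS" unfolding HS_def by (intro image_eqI[where x="(1,(2,0,0,0))"]) auto
    then show ?case using qm_one by simp
  next
    case (gen_base x)
    have q: "(0,-2,0,0) \<in> set QL" "(1,-1,1,-1) \<in> set QL" "(1,-1,-1,-1) \<in> set QL" unfolding QL_def by simp_all
    have "qm \<mu> x \<in> HS" if "\<mu>^12 = 1" "x \<in> set QL" for \<mu> x
      unfolding HS_def using that by (intro image_eqI[where x="(\<mu>,x)"]) auto
    then show ?case using gen_base zeta12 i12 q unfolding s7_qm t7_qm u7_qm by (auto simp del: qm.simps)
  next
    case (gen_mult x y) then show ?case using HS_mult by blast
  next
    case (gen_inv x) then show ?case using HS_matrix_inv by blast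
  qed
qed



lemma gen_grp_sub: assumes "A \<subseteq> gen_grp B" shows "gen_grp A \<subseteq> gen_grp B"
proof
  fix x assume "x \<in> gen_grp A"
  then show "x \<in> gen_grp B"
    by (induction rule: gen_grp.induct) (use assms in \<open>auto intro: gen_grp.intros\<close>)
qed

definition grpG :: "cmat set \<Rightarrow> bool" where
  "grpG G \<longleftrightarrow> G \<subseteq> HS \<and> mat 1 \<in> G \<and> (\<forall>x\<in>G. \<forall>y\<in>G. x ** y \<in> G) \<and> (\<forall>x\<in>G. matrix_inv x \<in> G)"

lemma grpG_gen: assumes "R \<subseteq> G7" shows "grpG (gen_grp R)"
proof -
  have "gen_grp R \<subseteq> G7" unfolding G7_def using assms gen_grp_sub unfolding G7_def by blast
  then show ?thesis unfolding grpG_def using G7_sub_HS by (auto intro: gen_grp.intros)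
qed

lemma inv_r: "A \<in> HS \<Longrightarrow> A ** matrix_inv A = mat 1" using HS_matrix_inv by blast
lemma inv_l: "A \<in> HS \<Longrightarrow> matrix_inv A ** A = mat 1" using HS_matrix_inv by blast

lemma inv_inv: "A \<in> HS \<Longrightarrow> matrix_inv (matrix_inv A) = A"
  by (rule matrix_inv_eq) (simp_all add: inv_r inv_l)

lemma inv_mult: "A \<in> HS \<Longrightarrow> B \<in> HS \<Longrightarrow> matrix_inv (A ** B) = matrix_inv B ** matrix_inv A"
proof (rule matrix_inv_eq)
  assume "A \<in> HS" "B \<in> HS"
  have "A ** B ** (matrix_inv B ** matrix_inv A) = A ** (B ** matrix_inv B) ** matrix_inv A"
    by (simp add: matrix_mul_assoc)
  then show "A ** B ** (matrix_inv B ** matrix_inv A) = mat 1" using \<open>A \<in> HS\<close> \<open>B \<in> HS\<close> by (simp add: inv_r)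
  have "matrix_inv B ** matrix_inv A ** (A ** B) = matrix_inv B ** (matrix_inv A ** A) ** B"
    by (simp add: matrix_mul_assoc)
  then show "matrix_inv B ** matrix_inv A ** (A ** B) = mat 1" using \<open>A \<in> HS\<close> \<open>B \<in> HS\<close> by (simp add: inv_l)
qed

lemma cancel1: "b \<in> HS \<Longrightarrow> b ** (matrix_inv b ** a ** b) ** matrix_inv b = a"
proof -
  assume b: "b \<in> HS"
  have "b ** (matrix_inv b ** a ** b) ** matrix_inv b = (b ** matrix_inv b) ** a ** (b ** matrix_inv b)"
    by (simp add: matrix_mul_assoc)
  then show ?thesis using b by (simp add: inv_r)
qed

lemma cancel2: "b \<in> HS \<Longrightarrow> b ** (matrix_inv b ** a ** b) = a ** b"
proof -
  assume b: "b \<in> HS"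
  have "b ** (matrix_inv b ** a ** b) = (b ** matrix_inv b) ** a ** b"
    by (simp add: matrix_mul_assoc)
  then show ?thesis using b by (simp add: inv_r)
qed

lemma cc_conj: assumes G: "grpG G" and g: "g \<in> G" and a: "a \<in> G"
  shows "conj_class G (g ** a ** matrix_inv g) = conj_class G a"
proof -
  have HS: "\<And>x. x \<in> G \<Longrightarrow> x \<in> HS" using G unfolding grpG_def by blast
  have cl: "\<And>x y. x \<in> G \<Longrightarrow> y \<in> G \<Longrightarrow> x ** y \<in> G" "\<And>x. x \<in> G \<Longrightarrow> matrix_inv x \<in> G"
    using G unfolding grpG_def by blast+
  show ?thesis
  proof (intro set_eqI iffI)
    fix z assume "z \<in> conj_class G (g ** a ** matrix_inv g)"
    then obtain h where h: "h \<in> G" "z = h ** (g ** a ** matrix_inv g) ** matrix_inv h"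
      unfolding conj_class_def by blast
    have "z = (h ** g) ** a ** matrix_inv (h ** g)"
      unfolding h(2) inv_mult[OF HS[OF h(1)] HS[OF g]] by (simp add: matrix_mul_assoc)
    then show "z \<in> conj_class G a" unfolding conj_class_def using cl h g by blast
  next
    fix z assume "z \<in> conj_class G a"
    then obtain h where h: "h \<in> G" "z = h ** a ** matrix_inv h"
      unfolding conj_class_def by blast
    have hg: "h ** matrix_inv g \<in> G" using cl h g by blast
    have "(h ** matrix_inv g) ** (g ** a ** matrix_inv g) ** matrix_inv (h ** matrix_inv g)
        = h ** (matrix_inv g ** g) ** a ** (matrix_inv g ** g) ** matrix_inv h"
      unfolding inv_mult[OF HS[OF h(1)] HS[OF cl(2)[OF g]]] inv_inv[OF HS[OF g]]
      by (simp add: matrix_mul_assoc)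
    also have "\<dots> = z" using h HS[OF g] by (simp add: inv_l)
    finally show "z \<in> conj_class G (g ** a ** matrix_inv g)" unfolding conj_class_def using hg by blast
  qed
qed

lemma cc_conj': assumes G: "grpG G" and b: "b \<in> G" and a: "a \<in> G"
  shows "conj_class G (matrix_inv b ** a ** b) = conj_class G a"
proof -
  have "b \<in> HS" "matrix_inv b \<in> G" using G b unfolding grpG_def by blast+
  then show ?thesis using cc_conj[OF G \<open>matrix_inv b \<in> G\<close> a] inv_inv by simp
qed

lemma refl_conj: assumes r: "is_reflection a" and g: "g \<in> HS"
  shows "is_reflection (g ** a ** matrix_inv g)"
proof -
  obtain v where v: "v \<noteq> 0" "{w. a *v w = w} = range (\<lambda>c. c *s v)"
    using r unfolding is_reflection_def by blast
  let ?gi = "matrix_inv g"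
  have gi: "\<And>w. ?gi *v (g *v w) = w" "\<And>w. g *v (?gi *v w) = w"
    using g by (simp_all add: matrix_vector_mul_assoc inv_l inv_r)
  have "g *v v \<noteq> 0" using v(1) gi(1)[of v] by (metis matrix_vector_mult_0_right)
  moreover have "{w. (g ** a ** ?gi) *v w = w} = range (\<lambda>c. c *s (g *v v))"
  proof (intro set_eqI iffI)
    fix w assume "w \<in> {w. (g ** a ** ?gi) *v w = w}"
    then have "g *v (a *v (?gi *v w)) = w" by (simp add: matrix_vector_mul_assoc matrix_mul_assoc)
    then have "a *v (?gi *v w) = ?gi *v w" using gi by metis
    then obtain c where "?gi *v w = c *s v" using v(2) by blast
    then have "w = c *s (g *v v)" using gi(2)[of w] by (simp add: vector_scalar_commute)
    then show "w \<in> range (\<lambda>c. c *s (g *v v))" by blast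
  next
    fix w assume "w \<in> range (\<lambda>c. c *s (g *v v))"
    then obtain c where c: "w = c *s (g *v v)" by blast
    have "?gi *v w = c *s v" unfolding c vector_scalar_commute gi(1) ..
    moreover have "a *v (c *s v) = c *s v" using v(2) by blast
    ultimately have "g *v (a *v (?gi *v w)) = w" using gi(2)[of w] by metis
    then show "w \<in> {w. (g ** a ** ?gi) *v w = w}" by (simp add: matrix_vector_mul_assoc matrix_mul_assoc)
  qed
  ultimately show ?thesis unfolding is_reflection_def by blast
qed

lemma refl_conj': assumes r: "is_reflection a" and b: "b \<in> HS"
  shows "is_reflection (matrix_inv b ** a ** b)"
  using refl_conj[OF r HS_matrix_inv(1)[OF b]] inv_inv[OF b] by simp



lemma decomp: "i + 1 < length T \<Longrightarrow> T = take i T @ T!i # T!(i+1) # drop (i+2) T"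
proof -
  assume i: "i + 1 < length T"
  have "drop i T = T!i # drop (Suc i) T" using i by (simp add: Cons_nth_drop_Suc)
  moreover have "drop (Suc i) T = T!(Suc i) # drop (Suc (Suc i)) T" using i by (simp add: Cons_nth_drop_Suc)
  ultimately show ?thesis by (metis Suc_eq_plus1 add_2_eq_Suc' append_take_drop_id)
qed

lemma move_app: "hurwitz_move (length xs) (xs @ a # b # ys) = xs @ b # (matrix_inv b ** a ** b) # ys"
  unfolding hurwitz_move_def by (simp add: nth_append)

lemma step_iff: "hurwitz_step T T' \<longleftrightarrow>
  (\<exists>xs a b ys. T = xs @ a # b # ys \<and> T' = xs @ b # (matrix_inv b ** a ** b) # ys)"
proof
  assume "hurwitz_step T T'"
  then obtain i where i: "i + 1 < length T" "T' = hurwitz_move i T" unfolding hurwitz_step_def by blast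
  let ?xs = "take i T"
  have l: "length ?xs = i" using i by simp
  have "T = ?xs @ T!i # T!(i+1) # drop (i+2) T" by (rule decomp[OF i(1)])
  moreover then have "T' = ?xs @ T!(i+1) # (matrix_inv (T!(i+1)) ** T!i ** T!(i+1)) # drop (i+2) T"
    using i(2) move_app l by metis
  ultimately show "\<exists>xs a b ys. T = xs @ a # b # ys \<and> T' = xs @ b # (matrix_inv b ** a ** b) # ys" by blast
next
  assume "\<exists>xs a b ys. T = xs @ a # b # ys \<and> T' = xs @ b # (matrix_inv b ** a ** b) # ys"
  then obtain xs a b ys where "T = xs @ a # b # ys" "T' = xs @ b # (matrix_inv b ** a ** b) # ys" by blast
  then show "hurwitz_step T T'" unfolding hurwitz_step_def using move_app[of xs a b ys]
    by (intro exI[of _ "length xs"]) simp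
qed

lemma lprod_append: "lprod (xs @ ys) = lprod xs ** lprod ys"
  unfolding lprod_def by (induction xs) (simp_all add: matrix_mul_assoc)

lemma lprod_Cons: "lprod (x # xs) = x ** lprod xs"
  unfolding lprod_def by simp

lemma lprod_Nil: "lprod [] = mat 1"
  unfolding lprod_def by simp

lemma step_props:
  assumes G: "grpG G" and st: "hurwitz_step T T'" and s: "set T \<subseteq> G"
  shows "set T' \<subseteq> G" "length T' = length T" "lprod T' = lprod T"
    "mset (map (conj_class G) T') = mset (map (conj_class G) T)"
    "gen_grp (set T') = gen_grp (set T)"
    "refl_fact G T \<Longrightarrow> refl_fact G T'"
proof -
  obtain xs a b ys where T: "T = xs @ a # b # ys" and T': "T' = xs @ b # (matrix_inv b ** a ** b) # ys"
    using st step_iff by blast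
  have cl: "\<And>x y. x \<in> G \<Longrightarrow> y \<in> G \<Longrightarrow> x ** y \<in> G" "\<And>x. x \<in> G \<Longrightarrow> matrix_inv x \<in> G"
    "\<And>x. x \<in> G \<Longrightarrow> x \<in> HS"
    using G unfolding grpG_def by blast+
  have ab: "a \<in> G" "b \<in> G" using s T by auto
  have c: "matrix_inv b ** a ** b \<in> G" by (rule cl(1)[OF cl(1)[OF cl(2)[OF ab(2)] ab(1)] ab(2)])
  show "set T' \<subseteq> G" using s c unfolding T T' by auto
  show "length T' = length T" unfolding T T' by simp
  have "b ** ((matrix_inv b ** a ** b) ** lprod ys) = (b ** (matrix_inv b ** a ** b)) ** lprod ys"
    by (rule matrix_mul_assoc)
  also have "\<dots> = (a ** b) ** lprod ys" using cancel2[OF cl(3)[OF ab(2)], of a] by simp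
  also have "\<dots> = a ** (b ** lprod ys)" by (rule matrix_mul_assoc[symmetric])
  finally show "lprod T' = lprod T" unfolding T T' lprod_append lprod_Cons by simp
  show "mset (map (conj_class G) T') = mset (map (conj_class G) T)"
    unfolding T T' using cc_conj'[OF G ab(2) ab(1)] by (simp add: add_mset_commute)
  show "gen_grp (set T') = gen_grp (set T)"
  proof
    have "b \<in> gen_grp (set T)" "a \<in> gen_grp (set T)" unfolding T by (auto intro: gen_grp.gen_base)
    then have "matrix_inv b ** a ** b \<in> gen_grp (set T)" by (metis gen_grp.gen_mult gen_grp.gen_inv)
    moreover have "x \<in> gen_grp (set T)" if "x \<in> set xs \<union> set ys \<union> {b}" for x
      using that unfolding T by (auto intro: gen_grp.gen_base)
    ultimately have "set T' \<subseteq> gen_grp (set T)" unfolding T' by auto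
    then show "gen_grp (set T') \<subseteq> gen_grp (set T)" by (rule gen_grp_sub)
    have "a = b ** (matrix_inv b ** a ** b) ** matrix_inv b" using cancel1[OF cl(3)[OF ab(2)]] by simp
    moreover have "b \<in> gen_grp (set T')" "matrix_inv b ** a ** b \<in> gen_grp (set T')"
      unfolding T' by (auto intro: gen_grp.gen_base)
    ultimately have "a \<in> gen_grp (set T')" by (metis gen_grp.gen_mult gen_grp.gen_inv)
    moreover have "x \<in> gen_grp (set T')" if "x \<in> set xs \<union> set ys \<union> {b}" for x
      using that unfolding T' by (auto intro: gen_grp.gen_base)
    ultimately have "set T \<subseteq> gen_grp (set T')" unfolding T by auto
    then show "gen_grp (set T) \<subseteq> gen_grp (set T')" by (rule gen_grp_sub)
  qed
  assume "refl_fact G T"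
  then have "is_reflection a" unfolding refl_fact_def refls_def T by auto
  then have "is_reflection (matrix_inv b ** a ** b)" using refl_conj' cl(3)[OF ab(2)] by blast
  then show "refl_fact G T'" using \<open>refl_fact G T\<close> c unfolding refl_fact_def refls_def T T' by auto
qed

lemma equiv_props:
  assumes G: "grpG G" and eq: "hurwitz_equiv T T'" and s: "set T \<subseteq> G"
  shows "set T' \<subseteq> G \<and> length T' = length T \<and> lprod T' = lprod T \<and>
    mset (map (conj_class G) T') = mset (map (conj_class G) T) \<and>
    gen_grp (set T') = gen_grp (set T) \<and> (refl_fact G T \<longrightarrow> refl_fact G T')"
  using eq[unfolded hurwitz_equiv_def]
proof (induction rule: rtranclp_induct)
  case base then show ?case using s by simp
next
  case (step y z)
  then show ?case using step_props[OF G step(2)] by simp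
qed

lemma step_snoc: "hurwitz_step T T' \<Longrightarrow> hurwitz_step (T @ [x]) (T' @ [x])"
  unfolding step_iff by fastforce

lemma equiv_snoc: "hurwitz_equiv T T' \<Longrightarrow> hurwitz_equiv (T @ [x]) (T' @ [x])"
  unfolding hurwitz_equiv_def
  by (induction rule: rtranclp_induct) (auto intro: rtranclp.rtrancl_into_rtrancl step_snoc)



lemma funpow_return:
  assumes fin: "finite S" and cl: "\<forall>x\<in>S. f x \<in> S" and inj: "inj_on f S" and x: "x \<in> S"
  shows "\<exists>n>0. (f^^n) x = x"
proof -
  have inS: "(f^^n) x \<in> S" for n by (induction n) (use x cl in auto)
  have "\<not> inj (\<lambda>n. (f^^n) x)"
  proof
    assume "inj (\<lambda>n. (f^^n) x)"
    moreover have "finite (range (\<lambda>n. (f^^n) x))" using inS fin by (meson finite_subset image_subsetI)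
    ultimately have "finite (UNIV :: nat set)" using finite_imageD by blast
    then show False by simp
  qed
  then obtain p q where pq: "p \<noteq> q" "(f^^p) x = (f^^q) x" unfolding inj_def by blast
  then obtain p d where pd: "d > 0" "(f^^(p+d)) x = (f^^p) x"
    by (metis add_diff_inverse_nat less_imp_add_positive nat_neq_iff)
  have "(f^^(p+d)) x = (f^^p) x \<Longrightarrow> (f^^d) x = x" for p
  proof (induction p)
    case 0 then show ?case by simp
  next
    case (Suc p)
    have "f ((f^^(p+d)) x) = f ((f^^p) x)" using Suc.prems by simp
    then have "(f^^(p+d)) x = (f^^p) x" using inj inS unfolding inj_on_def by blast
    then show ?case using Suc.IH by blast
  qed
  then show ?thesis using pd by blast
qed

definition hmi :: "nat \<Rightarrow> cmat list \<Rightarrow> cmat list" where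
  "hmi i T = take i T @ [T ! i ** T ! (i+1) ** matrix_inv (T ! i), T ! i] @ drop (i+2) T"

lemma hmi_move: assumes "i + 1 < length L" "set L \<subseteq> HS"
  shows "hmi i (hurwitz_move i L) = L"
proof -
  have L: "L = take i L @ L!i # L!(i+1) # drop (i+2) L" by (rule decomp[OF assms(1)])
  have li: "length (take i L) = i" using assms by simp
  have "L!(i+1) \<in> HS" using assms by (simp add: subset_iff)
  have "hurwitz_move i L = take i L @ L!(i+1) # (matrix_inv (L!(i+1)) ** L!i ** L!(i+1)) # drop (i+2) L"
    using move_app[of "take i L" "L!i" "L!(i+1)" "drop (i+2) L"] L li by metis
  then have "hmi i (hurwitz_move i L) = take i L @ (L!(i+1) ** (matrix_inv (L!(i+1)) ** L!i ** L!(i+1)) ** matrix_inv (L!(i+1))) # L!(i+1) # drop (i+2) L"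
    unfolding hmi_def using li by (simp add: nth_append)
  also have "\<dots> = L" using cancel1[OF \<open>L!(i+1) \<in> HS\<close>] L by simp
  finally show ?thesis .
qed

lemma step_sym: assumes G: "grpG G" and fin: "finite G" and st: "hurwitz_step T T'" and s: "set T \<subseteq> G"
  shows "hurwitz_equiv T' T"
proof -
  obtain i where i: "i + 1 < length T" "T' = hurwitz_move i T" using st unfolding hurwitz_step_def by blast
  define S where "S = {L. set L \<subseteq> G \<and> length L = length T}"
  define f where "f = hurwitz_move i"
  have GHS: "G \<subseteq> HS" using G unfolding grpG_def by blast
  have finS: "finite S" unfolding S_def using fin by (rule finite_lists_length_eq)
  have stS: "hurwitz_step L (f L)" if "L \<in> S" for L
    using that i(1) unfolding S_def f_def hurwitz_step_def by auto
  have clS: "\<forall>L\<in>S. f L \<in> S"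
  proof
    fix L assume L: "L \<in> S"
    have "set (f L) \<subseteq> G" "length (f L) = length L"
      using step_props(1,2)[OF G stS[OF L]] L unfolding S_def by auto
    then show "f L \<in> S" using L unfolding S_def by simp
  qed
  have injS: "inj_on f S"
    by (rule inj_on_inverseI[where g="hmi i"]) (use hmi_move i(1) GHS in \<open>auto simp: S_def f_def\<close>)
  have TS: "T \<in> S" unfolding S_def using s by simp
  obtain n where n: "n > 0" "(f^^n) T = T" using funpow_return[OF finS clS injS TS] by blast
  have chain: "hurwitz_equiv L ((f^^k) L)" if "L \<in> S" for L k
  proof (induction k)
    case 0 then show ?case unfolding hurwitz_equiv_def by simp
  next
    case (Suc k)
    have "(f^^k) L \<in> S" using that clS by (induction k) auto
    then show ?case using Suc stS unfolding hurwitz_equiv_def by (auto intro: rtranclp.rtrancl_into_rtrancl)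
  qed
  obtain n' where "n = Suc n'" using n(1) gr0_implies_Suc by blast
  then have "(f^^n') (f T) = T" using n(2) by (metis funpow_swap1 funpow.simps(2) comp_apply)
  moreover have "f T \<in> S" using clS TS by blast
  ultimately show ?thesis using chain[of "f T" n'] i(2) unfolding f_def by simp
qed

lemma equiv_sym: assumes G: "grpG G" and fin: "finite G" and eq: "hurwitz_equiv T T'" and s: "set T \<subseteq> G"
  shows "hurwitz_equiv T' T"
  using eq[unfolded hurwitz_equiv_def]
proof (induction rule: rtranclp_induct)
  case base then show ?case unfolding hurwitz_equiv_def by simp
next
  case (step y z)
  have "set y \<subseteq> G" using equiv_props[OF G _ s] step(1) unfolding hurwitz_equiv_def by blast
  then have "hurwitz_equiv z y" using step_sym[OF G fin step(2)] by blast
  then show ?case using step(3) unfolding hurwitz_equiv_def by simp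
qed

lemma equiv_trans: "hurwitz_equiv A B \<Longrightarrow> hurwitz_equiv B C \<Longrightarrow> hurwitz_equiv A C"
  unfolding hurwitz_equiv_def by simp

lemma count_list_filter: "count_list xs x = length (filter (\<lambda>y. y = x) xs)"
  by (induction xs) auto

lemma mat1_inv: "matrix_inv (mat 1 :: cmat) = mat 1"
  by (rule matrix_inv_eq) simp_all

lemma in_own_class: assumes "grpG G" shows "x \<in> conj_class G x"
proof -
  have "mat 1 \<in> G" using assms unfolding grpG_def by blast
  then show ?thesis unfolding conj_class_def using mat1_inv by force
qed

lemma class_of_member: assumes G: "grpG G" and y: "y \<in> G" and x: "x \<in> conj_class G y"
  shows "conj_class G x = conj_class G y"
proof -
  obtain h where h: "h \<in> G" "x = h ** y ** matrix_inv h" using x unfolding conj_class_def by blast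
  then show ?thesis using cc_conj[OF G h(1) y] by simp
qed

lemma class_refl: assumes G: "grpG G" and x: "x \<in> refls G" shows "conj_class G x \<in> refl_classes G"
proof -
  have xG: "x \<in> G" "is_reflection x" using x unfolding refls_def by auto
  have "conj_class G x \<subseteq> refls G"
  proof
    fix z assume "z \<in> conj_class G x"
    then obtain h where h: "h \<in> G" "z = h ** x ** matrix_inv h" unfolding conj_class_def by blast
    have cl: "\<And>x y. x \<in> G \<Longrightarrow> y \<in> G \<Longrightarrow> x ** y \<in> G" "\<And>x. x \<in> G \<Longrightarrow> matrix_inv x \<in> G"
      "\<And>x. x \<in> G \<Longrightarrow> x \<in> HS" using G unfolding grpG_def by blast+
    have "z \<in> G" unfolding h(2) by (rule cl(1)[OF cl(1)[OF h(1) xG(1)] cl(2)[OF h(1)]])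
    moreover have "is_reflection z" unfolding h(2) by (rule refl_conj[OF xG(2) cl(3)[OF h(1)]])
    ultimately show "z \<in> refls G" unfolding refls_def by blast
  qed
  then show ?thesis unfolding refl_classes_def using xG by blast
qed

lemma card_idx_class: assumes G: "grpG G" and y: "y \<in> G" and s: "set L \<subseteq> G"
  shows "card {l. l < length L \<and> L!l \<in> conj_class G y} = count (mset (map (conj_class G) L)) (conj_class G y)"
proof -
  have "{l. l < length L \<and> L!l \<in> conj_class G y} = {l. l < length (map (conj_class G) L) \<and> (map (conj_class G) L)!l = conj_class G y}"
  proof (intro set_eqI iffI)
    fix l assume "l \<in> {l. l < length L \<and> L!l \<in> conj_class G y}"
    then show "l \<in> {l. l < length (map (conj_class G) L) \<and> (map (conj_class G) L)!l = conj_class G y}"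
      using class_of_member[OF G y] by simp
  next
    fix l assume l: "l \<in> {l. l < length (map (conj_class G) L) \<and> (map (conj_class G) L)!l = conj_class G y}"
    then have "L!l \<in> conj_class G (L!l)" using in_own_class[OF G] by blast
    then show "l \<in> {l. l < length L \<and> L!l \<in> conj_class G y}" using l by auto
  qed
  moreover have "count (mset (map (conj_class G) L)) (conj_class G y) = card {l. l < length (map (conj_class G) L) \<and> (map (conj_class G) L)!l = conj_class G y}"
    unfolding count_mset count_list_filter length_filter_conv_card ..
  ultimately show ?thesis by simp
qed



lemma refls_sub: "refls G \<subseteq> G" unfolding refls_def by blast

lemma lprod_snoc: "lprod (P @ [x]) = lprod P ** x"
  unfolding lprod_append lprod_Cons lprod_Nil by simp

lemma main_step:
  assumes G: "grpG G" and fin: "finite G" and nk: "card (refl_classes G) \<le> k"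
    and cs: "class_searchable G (Suc k)"
    and IH: "hurwitz_classified_at G k"
  shows "hurwitz_classified_at G (Suc k)"
  unfolding hurwitz_classified_at_def
proof (intro allI impI iffI)
  fix T T' assume A: "length T = Suc k \<and> length T' = Suc k \<and> refl_fact G T \<and> refl_fact G T' \<and> generates G T \<and> generates G T'"
  have sT: "set T \<subseteq> G" "set T' \<subseteq> G" using A refls_sub unfolding refl_fact_def by blast+
  {
    assume "hurwitz_equiv T T'"
    then show "lprod T = lprod T' \<and> mset (map (conj_class G) T) = mset (map (conj_class G) T')"
      using equiv_props[OF G _ sT(1)] by metis
  }
  assume B: "lprod T = lprod T' \<and> mset (map (conj_class G) T) = mset (map (conj_class G) T')"
  have GHS: "G \<subseteq> HS" using G unfolding grpG_def by blast
  have finRC: "finite (refl_classes G)"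
  proof (rule finite_subset[of _ "Pow G"])
    show "refl_classes G \<subseteq> Pow G" unfolding refl_classes_def using refls_sub by blast
  qed (use fin in simp)
  have sub: "set (map (conj_class G) T) \<subseteq> refl_classes G"
    using A class_refl[OF G] unfolding refl_fact_def by auto
  have "card (set (map (conj_class G) T)) \<le> card (refl_classes G)"
    by (rule card_mono[OF finRC sub])
  then have "\<not> distinct (map (conj_class G) T)" using nk A distinct_card by fastforce
  then obtain i j where ij: "i < Suc k" "j < Suc k" "i \<noteq> j" "conj_class G (T!i) = conj_class G (T!j)"
    using A unfolding distinct_conv_nth by auto
  define K where "K = conj_class G (T!i)"
  define x where "x = T!i"
  have xG: "x \<in> G" "x \<in> refls G" using sT ij A unfolding x_def refl_fact_def by auto
  have KR: "K \<in> refl_classes G" unfolding K_def using class_refl[OF G xG(2)] x_def by simp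
  have xK: "x \<in> K" unfolding K_def x_def by (rule in_own_class[OF G])
  have "{i, j} \<subseteq> {l. l < Suc k \<and> T!l \<in> K}"
    using ij in_own_class[OF G] unfolding K_def by auto
  then have "card {i, j} \<le> card {l. l < Suc k \<and> T!l \<in> K}" by (intro card_mono) auto
  then have cT: "card {l. l < Suc k \<and> T!l \<in> K} \<ge> 2" using ij(3) by simp
  have "card {l. l < Suc k \<and> T'!l \<in> K} = card {l. l < Suc k \<and> T!l \<in> K}"
    using card_idx_class[OF G xG(1) sT(1)] card_idx_class[OF G xG(1) sT(2)] A B
    unfolding K_def x_def by simp
  then have cT': "card {l. l < Suc k \<and> T'!l \<in> K} \<ge> 2" using cT by simp
  have "\<forall>x \<in> K. \<exists>T1. hurwitz_equiv T T1 \<and> T1 \<noteq> [] \<and> last T1 = x \<and> generates G (butlast T1)"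
    using cs A KR cT unfolding class_searchable_def by blast
  then obtain T1 where T1: "hurwitz_equiv T T1" "T1 \<noteq> []" "last T1 = x" "generates G (butlast T1)"
    using xK by blast
  have "\<forall>x \<in> K. \<exists>T1. hurwitz_equiv T' T1 \<and> T1 \<noteq> [] \<and> last T1 = x \<and> generates G (butlast T1)"
    using cs A KR cT' unfolding class_searchable_def by blast
  then obtain T2 where T2: "hurwitz_equiv T' T2" "T2 \<noteq> []" "last T2 = x" "generates G (butlast T2)"
    using xK by blast
  define P where "P = butlast T1"
  define P' where "P' = butlast T2"
  have T1P: "T1 = P @ [x]" unfolding P_def using T1(2,3) append_butlast_last_id by metis
  have T2P: "T2 = P' @ [x]" unfolding P'_def using T2(2,3) append_butlast_last_id by metis
  have p1: "set T1 \<subseteq> G \<and> length T1 = length T \<and> lprod T1 = lprod T \<and>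
    mset (map (conj_class G) T1) = mset (map (conj_class G) T) \<and> refl_fact G T1"
    using equiv_props[OF G T1(1) sT(1)] A by blast
  have p2: "set T2 \<subseteq> G \<and> length T2 = length T' \<and> lprod T2 = lprod T' \<and>
    mset (map (conj_class G) T2) = mset (map (conj_class G) T') \<and> refl_fact G T2"
    using equiv_props[OF G T2(1) sT(2)] A by blast
  have lenP: "length P = k" "length P' = k" using p1 p2 A T1P T2P by auto
  have rfP: "refl_fact G P" "refl_fact G P'" using p1 p2 T1P T2P unfolding refl_fact_def by auto
  have genP: "generates G P" "generates G P'" using T1(4) T2(4) unfolding P_def P'_def .
  have "lprod P ** x = lprod P' ** x" using p1 p2 B T1P T2P lprod_snoc by metis
  then have "(lprod P ** x) ** matrix_inv x = (lprod P' ** x) ** matrix_inv x" by simp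
  moreover have "x \<in> HS" using xG GHS by blast
  ultimately have lpP: "lprod P = lprod P'" by (simp add: matrix_mul_assoc[symmetric] inv_r)
  have "mset (map (conj_class G) (P @ [x])) = mset (map (conj_class G) (P' @ [x]))"
    using p1 p2 B T1P T2P by metis
  then have msP: "mset (map (conj_class G) P) = mset (map (conj_class G) P')" by simp
  have "hurwitz_equiv P P'" using IH lenP rfP genP lpP msP unfolding hurwitz_classified_at_def by blast
  then have "hurwitz_equiv T1 T2" unfolding T1P T2P by (rule equiv_snoc)
  moreover have "hurwitz_equiv T2 T'" by (rule equiv_sym[OF G fin T2(1) sT(2)])
  ultimately show "hurwitz_equiv T T'" using T1(1) equiv_trans by blast
qed

lemma classified_0: "hurwitz_classified_at G 0"
  unfolding hurwitz_classified_at_def hurwitz_equiv_def by simp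

theorem lemma3p18:
  fixes G :: "cmat set" and n m :: nat
  assumes "reflection_subgroup_of_G7 G"
    and "n = card (refl_classes G)"
    and "m \<ge> n"
    and "\<forall>k > m. class_searchable G k"
    and "\<forall>k \<in> {1..m}. hurwitz_classified_at G k"
  shows "\<forall>k \<ge> 1. hurwitz_classified_at G k"
proof -
  obtain R where R: "R \<subseteq> {r \<in> G7. is_reflection r}" "G = gen_grp R"
    using assms(1) unfolding reflection_subgroup_of_G7_def by blast
  have G: "grpG G" unfolding R(2) by (rule grpG_gen) (use R(1) in blast)
  have fin: "finite G" using G finite_HS unfolding grpG_def by (meson finite_subset)
  have "hurwitz_classified_at G k" for k
  proof (induction k)
    case 0 then show ?case by (rule classified_0)
  next
    case (Suc k)
    show ?case
    proof (cases "Suc k \<le> m")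
      case True then show ?thesis using assms(5) by simp
    next
      case False
      then have "card (refl_classes G) \<le> k" using assms(2,3) by simp
      moreover have "class_searchable G (Suc k)" using assms(4) False by simp
      ultimately show ?thesis using main_step[OF G fin] Suc.IH by blast
    qed
  qed
  then show ?thesis by blast
qed

end
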